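(* Consider computation in the l2-MBQC setting described in the context, where the only correlated resources are independent copies of the bipartite quantum CHSH box. Then reliable computation is possible: there exists a constant $\delta<1/2$ such that for every $n\ge 1$ and every Boolean function $f:\{0,1\}^n\to\{0,1\}$ there is an l2-MBQC procedure using finitely many independent CHSH boxes which, on every input $\vec b\in\{0,1\}^n$, outputs $f(\vec b)$ with probability at least $1-\delta$.
   Context: l2-MBQC ("MBQC with mod-2 linear classical processing"): a classical control computer receives an input string $\vec b=b_1\dots b_n$. It has access to black boxes, each of which receives a one-bit input from the control computer and returns a one-bit output. The control computer is restricted to computing sums modulo 2 of subsets of the input bits, of previously received box outputs, and possibly the constant $1$; each box input (which may depend on earlier box outputs, i.e. adaptively) and the final output of the computation must be such mod-2 affine functions. The bipartite quantum CHSH box consists of two one-bit-in/one-bit-out boxes sharing the two-qubit state $(|00\rangle+|11\rangle)/\sqrt2$: on input $b_0$ the first box measures its qubit in the $Z$ basis if $b_0=0$ and in the $X$ basis if $b_0=1$; on input $b_1$ the second box measures in the eigenbasis of $(Z+X)/\sqrt2$ if $b_1=0$ and of $(X-Z)/\sqrt2$ if $b_1=1$; measurement outcome $+1$ is output as bit $0$ and $-1$ as bit $1$. For every input pair, the mod-2 sum of the two outputs equals $b_0\wedge b_1$ with probability $\cos^2(\pi/8)$. Different copies of the CHSH box are independent. *)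

theory Defs
  imports Complex_Main
begin

text \<open>Mod-2 affine functions of the input bits and of the box outputs.
  Aff c I J denotes  c + sum_{i in I} b_i + sum_{t in J} o_t  (mod 2).\<close>
datatype aff = Aff bool "nat set" "nat set"

fun aff_eval :: "aff \<Rightarrow> bool list \<Rightarrow> bool list \<Rightarrow> bool" where
  "aff_eval (Aff c I J) b os =
     ((c \<noteq> odd (card {i\<in>I. b ! i})) \<noteq> odd (card {t\<in>J. os ! t}))"

fun aff_ok :: "nat \<Rightarrow> nat \<Rightarrow> aff \<Rightarrow> bool" where
  "aff_ok n k (Aff c I J) \<longleftrightarrow> I \<subseteq> {0..<n} \<and> J \<subseteq> {0..<k}"

text \<open>Joint output distribution of one quantum CHSH box:
  chsh_prob x y a c = Pr[outputs (x,y) | inputs (a,c)].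
  Uniform marginals and x xor y = a and c with probability cos^2(pi/8).\<close>
definition chsh_prob :: "bool \<Rightarrow> bool \<Rightarrow> bool \<Rightarrow> bool \<Rightarrow> real" where
  "chsh_prob x y a c =
     (if (x \<noteq> y) = (a \<and> c) then (cos (pi/8))\<^sup>2 / 2 else (sin (pi/8))\<^sup>2 / 2)"

text \<open>The 2m one-bit boxes are queried
  in a fixed temporal order: qtime (j, False) / qtime (j, True) is the time step
  at which the first / second half of CHSH box j is queried. inp t is the affine
  function giving the box input at time step t (it may use input bits and
  outputs of earlier time steps only); outp is the final affine output.\<close>
record l2proc =
  nboxes :: nat
  qtime :: "nat \<times> bool \<Rightarrow> nat"
  inp :: "nat \<Rightarrow> aff"
  outp :: aff

definition l2proc_wf :: "nat \<Rightarrow> l2proc \<Rightarrow> bool" where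
  "l2proc_wf n P \<longleftrightarrow>
     bij_betw (qtime P) ({0..<nboxes P} \<times> UNIV) {0..<2 * nboxes P} \<and>
     (\<forall>t < 2 * nboxes P. aff_ok n t (inp P t)) \<and>
     aff_ok n (2 * nboxes P) (outp P)"

text \<open>Probability of the output transcript os (os ! t = output at time t) on input b.
  By non-signalling of the boxes, the sequential adaptive process yields the product
  over boxes of the joint CHSH distribution at the (adaptively chosen) inputs.\<close>
definition transcript_prob :: "l2proc \<Rightarrow> bool list \<Rightarrow> bool list \<Rightarrow> real" where
  "transcript_prob P b os =
     (\<Prod>j<nboxes P.
        chsh_prob (os ! qtime P (j, False)) (os ! qtime P (j, True))
                  (aff_eval (inp P (qtime P (j, False))) b os)
                  (aff_eval (inp P (qtime P (j, True))) b os))"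

definition output_prob :: "l2proc \<Rightarrow> bool list \<Rightarrow> bool \<Rightarrow> real" where
  "output_prob P b v =
     (\<Sum>os\<in>{os. length os = 2 * nboxes P \<and> aff_eval (outp P) b os = v}. transcript_prob P b os)"

end

theory Submission
  imports Defs
begin

datatype ckt = In nat | Cst bool | Neg ckt | Xr ckt ckt | An ckt ckt | Mj ckt ckt ckt

fun nb :: "ckt \<Rightarrow> nat" where
  "nb (In i) = 0" | "nb (Cst c) = 0" | "nb (Neg t) = nb t"
| "nb (Xr t1 t2) = nb t1 + nb t2" | "nb (An t1 t2) = Suc (nb t1 + nb t2)"
| "nb (Mj t1 t2 t3) = Suc (nb t1 + nb t2 + nb t3)"

fun axor :: "aff \<Rightarrow> aff \<Rightarrow> aff" where
  "axor (Aff c I J) (Aff d K L) = Aff (c \<noteq> d) ((I - K) \<union> (K - I)) ((J - L) \<union> (L - J))"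
fun anot :: "aff \<Rightarrow> aff" where "anot (Aff c I J) = Aff (\<not> c) I J"
fun ais :: "aff \<Rightarrow> nat set" where "ais (Aff c I J) = I"
fun ajs :: "aff \<Rightarrow> nat set" where "ajs (Aff c I J) = J"

definition pr :: "nat \<Rightarrow> aff" where "pr k = Aff False {} {2*k, Suc (2*k)}"

fun val :: "nat \<Rightarrow> ckt \<Rightarrow> aff" where
  "val a (In i) = Aff False {i} {}"
| "val a (Cst c) = Aff c {} {}"
| "val a (Neg t) = anot (val a t)"
| "val a (Xr t1 t2) = axor (val a t1) (val (a + nb t1) t2)"
| "val a (An t1 t2) = pr (a + nb t1 + nb t2)"
| "val a (Mj t1 t2 t3) = axor (val (a + nb t1) t2) (pr (a + nb t1 + nb t2 + nb t3))"

fun binp :: "nat \<Rightarrow> ckt \<Rightarrow> nat \<Rightarrow> aff \<times> aff" where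
  "binp a (In i) j = (Aff False {} {}, Aff False {} {})"
| "binp a (Cst c) j = (Aff False {} {}, Aff False {} {})"
| "binp a (Neg t) j = binp a t j"
| "binp a (Xr t1 t2) j = (if j < a + nb t1 then binp a t1 j else binp (a + nb t1) t2 j)"
| "binp a (An t1 t2) j = (if j < a + nb t1 then binp a t1 j
     else if j < a + nb t1 + nb t2 then binp (a + nb t1) t2 j
     else (val a t1, val (a + nb t1) t2))"
| "binp a (Mj t1 t2 t3) j = (if j < a + nb t1 then binp a t1 j
     else if j < a + nb t1 + nb t2 then binp (a + nb t1) t2 j
     else if j < a + nb t1 + nb t2 + nb t3 then binp (a + nb t1 + nb t2) t3 j
     else (axor (val a t1) (val (a + nb t1) t2), axor (val (a + nb t1) t2) (val (a + nb t1 + nb t2) t3)))"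

fun vl :: "nat \<Rightarrow> ckt \<Rightarrow> bool" where
  "vl n (In i) = (i < n)" | "vl n (Cst c) = True" | "vl n (Neg t) = vl n t"
| "vl n (Xr t1 t2) = (vl n t1 \<and> vl n t2)" | "vl n (An t1 t2) = (vl n t1 \<and> vl n t2)"
| "vl n (Mj t1 t2 t3) = (vl n t1 \<and> vl n t2 \<and> vl n t3)"

lemma ajs_axor: "ajs (axor A B) \<subseteq> ajs A \<union> ajs B" by (cases A; cases B) auto
lemma ais_axor: "ais (axor A B) \<subseteq> ais A \<union> ais B" by (cases A; cases B) auto
lemma ajs_anot[simp]: "ajs (anot A) = ajs A" by (cases A) auto
lemma ais_anot[simp]: "ais (anot A) = ais A" by (cases A) auto
lemma ajs_pr[simp]: "ajs (pr k) = {2*k, Suc (2*k)}" by (simp add: pr_def)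
lemma ais_pr[simp]: "ais (pr k) = {}" by (simp add: pr_def)

lemma JB1: "ajs (val a t) \<subseteq> {2*a..<2*(a + nb t)}"
proof (induction t arbitrary: a)
  case (Xr t1 t2)
  show ?case using ajs_axor[of "val a t1" "val (a + nb t1) t2"] Xr.IH(1)[of a] Xr.IH(2)[of "a + nb t1"]
    by fastforce
next
  case (Mj t1 t2 t3)
  show ?case using ajs_axor[of "val (a + nb t1) t2" "pr (a + nb t1 + nb t2 + nb t3)"] Mj.IH(2)[of "a + nb t1"]
    by fastforce
qed auto

lemma sub_mono: "(A::nat set) \<subseteq> {2*a'..<2*j} \<Longrightarrow> a \<le> a' \<Longrightarrow> A \<subseteq> {2*a..<2*j}"
  by auto

lemma JB2: "a \<le> j \<Longrightarrow> j < a + nb t \<Longrightarrow>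
   ajs (fst (binp a t j)) \<subseteq> {2*a..<2*j} \<and> ajs (snd (binp a t j)) \<subseteq> {2*a..<2*j}"
proof (induction t arbitrary: a)
  case (Neg t)
  then show ?case by simp
next
  case (Xr t1 t2)
  show ?case
  proof (cases "j < a + nb t1")
    case True
    then show ?thesis using Xr.IH(1)[of a] Xr.prems by simp
  next
    case False
    then have "binp a (Xr t1 t2) j = binp (a + nb t1) t2 j" by simp
    moreover have "ajs (fst (binp (a + nb t1) t2 j)) \<subseteq> {2*(a + nb t1)..<2*j} \<and>
        ajs (snd (binp (a + nb t1) t2 j)) \<subseteq> {2*(a + nb t1)..<2*j}"
      using Xr.IH(2)[of "a + nb t1"] Xr.prems False by simp
    ultimately show ?thesis using sub_mono[of _ "a + nb t1" j a] by (metis le_add1)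
  qed
next
  case (An t1 t2)
  show ?case
  proof (cases "j < a + nb t1")
    case True
    then show ?thesis using An.IH(1)[of a] An.prems by simp
  next
    case F1: False
    show ?thesis
    proof (cases "j < a + nb t1 + nb t2")
      case True
      then have "binp a (An t1 t2) j = binp (a + nb t1) t2 j" using F1 by simp
      moreover have "ajs (fst (binp (a + nb t1) t2 j)) \<subseteq> {2*(a + nb t1)..<2*j} \<and>
        ajs (snd (binp (a + nb t1) t2 j)) \<subseteq> {2*(a + nb t1)..<2*j}"
        using An.IH(2)[of "a + nb t1"] True F1 by simp
      ultimately show ?thesis using sub_mono[of _ "a + nb t1" j a] by (metis le_add1)
    next
      case False
      with An.prems F1 have j: "j = a + nb t1 + nb t2" by simp
      have "binp a (An t1 t2) j = (val a t1, val (a + nb t1) t2)" using F1 False by simp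
      moreover have "ajs (val a t1) \<subseteq> {2*a..<2*j}" using JB1[of a t1] j by auto
      moreover have "ajs (val (a + nb t1) t2) \<subseteq> {2*a..<2*j}" using JB1[of "a + nb t1" t2] j by auto
      ultimately show ?thesis by simp
    qed
  qed
next
  case (Mj t1 t2 t3)
  show ?case
  proof (cases "j < a + nb t1")
    case True
    then show ?thesis using Mj.IH(1)[of a] Mj.prems by simp
  next
    case F1: False
    show ?thesis
    proof (cases "j < a + nb t1 + nb t2")
      case True
      then have "binp a (Mj t1 t2 t3) j = binp (a + nb t1) t2 j" using F1 by simp
      moreover have "ajs (fst (binp (a + nb t1) t2 j)) \<subseteq> {2*(a + nb t1)..<2*j} \<and>
        ajs (snd (binp (a + nb t1) t2 j)) \<subseteq> {2*(a + nb t1)..<2*j}"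
        using Mj.IH(2)[of "a + nb t1"] True F1 by simp
      ultimately show ?thesis using sub_mono[of _ "a + nb t1" j a] by (metis le_add1)
    next
      case F2: False
      show ?thesis
      proof (cases "j < a + nb t1 + nb t2 + nb t3")
        case True
        then have "binp a (Mj t1 t2 t3) j = binp (a + nb t1 + nb t2) t3 j" using F1 F2 by simp
        moreover have "ajs (fst (binp (a + nb t1 + nb t2) t3 j)) \<subseteq> {2*(a + nb t1 + nb t2)..<2*j} \<and>
          ajs (snd (binp (a + nb t1 + nb t2) t3 j)) \<subseteq> {2*(a + nb t1 + nb t2)..<2*j}"
          using Mj.IH(3)[of "a + nb t1 + nb t2"] True F2 by simp
        ultimately show ?thesis using sub_mono[of _ "a + nb t1 + nb t2" j a]
          by (metis le_add1 add.assoc)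
      next
        case False
        with Mj.prems F1 F2 have j: "j = a + nb t1 + nb t2 + nb t3" by simp
        have "binp a (Mj t1 t2 t3) j = (axor (val a t1) (val (a + nb t1) t2),
             axor (val (a + nb t1) t2) (val (a + nb t1 + nb t2) t3))" using F1 F2 False by simp
        moreover have "ajs (val a t1) \<subseteq> {2*a..<2*j}" using JB1[of a t1] j by auto
        moreover have "ajs (val (a + nb t1) t2) \<subseteq> {2*a..<2*j}" using JB1[of "a + nb t1" t2] j by auto
        moreover have "ajs (val (a + nb t1 + nb t2) t3) \<subseteq> {2*a..<2*j}"
          using JB1[of "a + nb t1 + nb t2" t3] j by auto
        ultimately show ?thesis using ajs_axor[of "val a t1" "val (a + nb t1) t2"]
            ajs_axor[of "val (a + nb t1) t2" "val (a + nb t1 + nb t2) t3"] by auto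
      qed
    qed
  qed
qed auto

lemma IB1: "vl n t \<Longrightarrow> ais (val a t) \<subseteq> {0..<n}"
proof (induction t arbitrary: a)
  case (Xr t1 t2)
  then have "ais (val a t1) \<union> ais (val (a + nb t1) t2) \<subseteq> {0..<n}" by auto
  then show ?case using ais_axor[of "val a t1" "val (a + nb t1) t2"] by (simp only: val.simps)
next
  case (Mj t1 t2 t3)
  then have "ais (val (a + nb t1) t2) \<subseteq> {0..<n}" by auto
  then show ?case using ais_axor[of "val (a + nb t1) t2" "pr (a + nb t1 + nb t2 + nb t3)"] by (simp only: val.simps ais_pr Un_empty_right)
qed auto

lemma IB2: "vl n t \<Longrightarrow> ais (fst (binp a t j)) \<subseteq> {0..<n} \<and> ais (snd (binp a t j)) \<subseteq> {0..<n}"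
proof (induction t arbitrary: a)
  case (Xr t1 t2)
  have p: "vl n t1" "vl n t2" using Xr.prems by auto
  show ?case using Xr.IH(1)[OF p(1), of a] Xr.IH(2)[OF p(2), of "a + nb t1"] by simp
next
  case (An t1 t2)
  have p: "vl n t1" "vl n t2" using An.prems by auto
  show ?case using An.IH(1)[OF p(1), of a] An.IH(2)[OF p(2), of "a + nb t1"]
     IB1[OF p(1), of a] IB1[OF p(2), of "a + nb t1"] by simp
next
  case (Mj t1 t2 t3)
  have p: "vl n t1" "vl n t2" "vl n t3" using Mj.prems by auto
  have h1: "ais (axor (val a t1) (val (a + nb t1) t2)) \<subseteq> {0..<n}"
    using IB1[OF p(1), of a] IB1[OF p(2), of "a + nb t1"] ais_axor[of "val a t1" "val (a + nb t1) t2"] by auto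
  have h2: "ais (axor (val (a + nb t1) t2) (val (a + nb t1 + nb t2) t3)) \<subseteq> {0..<n}"
    using IB1[OF p(2), of "a + nb t1"] IB1[OF p(3), of "a + nb t1 + nb t2"]
      ais_axor[of "val (a + nb t1) t2" "val (a + nb t1 + nb t2) t3"] by auto
  show ?case using Mj.IH(1)[OF p(1), of a] Mj.IH(2)[OF p(2), of "a + nb t1"]
      Mj.IH(3)[OF p(3), of "a + nb t1 + nb t2"] h1 h2 by simp
qed auto

lemma FI: "finite (ais (val a t))"
proof (induction t arbitrary: a)
  case (Xr t1 t2)
  have "finite (ais (val a t1) \<union> ais (val (a + nb t1) t2))" using Xr.IH(1)[of a] Xr.IH(2)[of "a + nb t1"] by simp
  then show ?case using ais_axor[of "val a t1" "val (a + nb t1) t2"] by (simp add: finite_subset)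
next
  case (Mj t1 t2 t3)
  have "finite (ais (val (a + nb t1) t2) \<union> ais (pr (a + nb t1 + nb t2 + nb t3)))" using Mj.IH(2)[of "a + nb t1"] by simp
  then show ?case using ais_axor[of "val (a + nb t1) t2" "pr (a + nb t1 + nb t2 + nb t3)"] by (simp add: finite_subset)
qed auto

lemma FJ: "finite (ajs (val a t))"
  using JB1[of a t] finite_subset by blast

lemma card_symdiff_odd:
  assumes "finite A" "finite B"
  shows "odd (card ((A - B) \<union> (B - A))) = (odd (card A) \<noteq> odd (card B))"
proof -
  have e1: "card ((A - B) \<union> (B - A)) = card (A - B) + card (B - A)"
    using assms by (intro card_Un_disjoint) auto
  have "A = (A - B) \<union> (A \<inter> B)" by auto
  then have e2: "card A = card (A - B) + card (A \<inter> B)"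
    using assms by (metis card_Un_disjoint Diff_disjoint Int_Diff_disjoint Int_commute finite_Diff finite_Int)
  have "B = (B - A) \<union> (A \<inter> B)" by auto
  then have e3: "card B = card (B - A) + card (A \<inter> B)"
    using assms by (metis card_Un_disjoint Int_Diff_disjoint Int_commute finite_Diff finite_Int)
  show ?thesis using e1 e2 e3 by (simp; blast)
qed

lemma eval_axor:
  assumes "finite (ais A)" "finite (ais B)" "finite (ajs A)" "finite (ajs B)"
  shows "aff_eval (axor A B) b os = (aff_eval A b os \<noteq> aff_eval B b os)"
proof (cases A; cases B)
  fix c I J d K L assume A: "A = Aff c I J" and B: "B = Aff d K L"
  have s1: "{i \<in> (I - K) \<union> (K - I). b ! i} = ({i\<in>I. b!i} - {i\<in>K. b!i}) \<union> ({i\<in>K. b!i} - {i\<in>I. b!i})" by auto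
  have s2: "{i \<in> (J - L) \<union> (L - J). os ! i} = ({i\<in>J. os!i} - {i\<in>L. os!i}) \<union> ({i\<in>L. os!i} - {i\<in>J. os!i})" by auto
  have f: "finite {i\<in>I. b!i}" "finite {i\<in>K. b!i}" "finite {i\<in>J. os!i}" "finite {i\<in>L. os!i}"
    using assms A B by auto
  show ?thesis using A B s1 s2 card_symdiff_odd[OF f(1,2)] card_symdiff_odd[OF f(3,4)] by auto
qed

lemma eval_anot[simp]: "aff_eval (anot A) b os = (\<not> aff_eval A b os)"
  by (cases A) auto

lemma eval_pr: "aff_eval (pr k) b os = (os ! (2*k) \<noteq> os ! Suc (2*k))"
proof -
  have "{t \<in> {2*k, Suc (2*k)}. os ! t} = (if os!(2*k) then {2*k} else {}) \<union> (if os ! Suc (2*k) then {Suc (2*k)} else {})"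
    by auto
  then show ?thesis by (simp add: pr_def)
qed

lemma eval_In[simp]: "aff_eval (Aff False {i} {}) b os = b ! i"
proof -
  have "{x \<in> {i}. b ! x} = (if b!i then {i} else {})" by auto
  then show ?thesis by simp
qed

lemma eval_local: "ajs A \<subseteq> {..<length os} \<Longrightarrow> aff_eval A b (os @ s) = aff_eval A b os"
proof (cases A)
  fix c I J assume A: "A = Aff c I J" and "ajs A \<subseteq> {..<length os}"
  then have "{t \<in> J. (os @ s) ! t} = {t \<in> J. os ! t}" by (auto simp: nth_append)
  then show ?thesis using A by simp
qed

lemma aff_ok_iff: "aff_ok n k A \<longleftrightarrow> ais A \<subseteq> {0..<n} \<and> ajs A \<subseteq> {0..<k}"
  by (cases A) auto

definition chb :: "nat \<Rightarrow> ckt \<Rightarrow> bool list \<Rightarrow> bool list \<Rightarrow> nat \<Rightarrow> real" where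
  "chb a t b os j = chsh_prob (os ! (2*j)) (os ! Suc (2*j))
     (aff_eval (fst (binp a t j)) b os) (aff_eval (snd (binp a t j)) b os)"

definition TW :: "nat \<Rightarrow> ckt \<Rightarrow> bool list \<Rightarrow> bool list \<Rightarrow> real" where
  "TW a t b os = (\<Prod>j\<in>{a..<a + nb t}. chb a t b os j)"

lemma TW_local: "2*(a + nb t) \<le> length os \<Longrightarrow> TW a t b (os @ s) = TW a t b os"
  unfolding TW_def
proof (rule prod.cong[OF refl])
  fix j assume l: "2*(a + nb t) \<le> length os" and j: "j \<in> {a..<a + nb t}"
  then have j1: "2*j < length os" "Suc (2*j) < length os" by auto
  have "ajs (fst (binp a t j)) \<subseteq> {..<length os}" "ajs (snd (binp a t j)) \<subseteq> {..<length os}"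
    using JB2[of a j t] j j1 by auto
  then show "chb a t b (os @ s) j = chb a t b os j"
    unfolding chb_def using j1 eval_local by (simp add: nth_append)
qed

lemma val_local: "2*(a + nb t) \<le> length os \<Longrightarrow> aff_eval (val a t) b (os @ s) = aff_eval (val a t) b os"
  using JB1[of a t] by (intro eval_local) auto

lemma TW_Neg: "TW a (Neg t) b os = TW a t b os"
  by (simp add: TW_def chb_def)

lemma TW_Xr: "TW a (Xr t1 t2) b os = TW a t1 b os * TW (a + nb t1) t2 b os"
proof -
  have "TW a (Xr t1 t2) b os = (\<Prod>j\<in>{a..<a + nb t1}. chb a (Xr t1 t2) b os j) *
      (\<Prod>j\<in>{a + nb t1..<a + nb t1 + nb t2}. chb a (Xr t1 t2) b os j)"
    unfolding TW_def by (simp add: prod.atLeastLessThan_concat add.assoc)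
  also have "... = TW a t1 b os * TW (a + nb t1) t2 b os"
    unfolding TW_def by (intro arg_cong2[where f="(*)"] prod.cong) (auto simp: chb_def)
  finally show ?thesis .
qed

lemma TW_An: "TW a (An t1 t2) b os = TW a t1 b os * TW (a + nb t1) t2 b os *
   chsh_prob (os ! (2*(a + nb t1 + nb t2))) (os ! Suc (2*(a + nb t1 + nb t2)))
     (aff_eval (val a t1) b os) (aff_eval (val (a + nb t1) t2) b os)"
proof -
  have "TW a (An t1 t2) b os = (\<Prod>j\<in>{a..<a + nb t1}. chb a (An t1 t2) b os j) *
      (\<Prod>j\<in>{a + nb t1..<a + nb t1 + nb t2}. chb a (An t1 t2) b os j) * chb a (An t1 t2) b os (a + nb t1 + nb t2)"
    unfolding TW_def by (simp add: prod.atLeastLessThan_concat add.assoc)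
  also have "... = TW a t1 b os * TW (a + nb t1) t2 b os * chb a (An t1 t2) b os (a + nb t1 + nb t2)"
    unfolding TW_def by (intro arg_cong2[where f="(*)"] prod.cong refl) (auto simp: chb_def)
  finally show ?thesis by (simp add: chb_def)
qed

lemma TW_Mj: "TW a (Mj t1 t2 t3) b os = TW a t1 b os * TW (a + nb t1) t2 b os * TW (a + nb t1 + nb t2) t3 b os *
   chsh_prob (os ! (2*(a + nb t1 + nb t2 + nb t3))) (os ! Suc (2*(a + nb t1 + nb t2 + nb t3)))
     (aff_eval (axor (val a t1) (val (a + nb t1) t2)) b os)
     (aff_eval (axor (val (a + nb t1) t2) (val (a + nb t1 + nb t2) t3)) b os)"
proof -
  have "TW a (Mj t1 t2 t3) b os = (\<Prod>j\<in>{a..<a + nb t1}. chb a (Mj t1 t2 t3) b os j) *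
      (\<Prod>j\<in>{a + nb t1..<a + nb t1 + nb t2}. chb a (Mj t1 t2 t3) b os j) *
      (\<Prod>j\<in>{a + nb t1 + nb t2..<a + nb t1 + nb t2 + nb t3}. chb a (Mj t1 t2 t3) b os j) *
      chb a (Mj t1 t2 t3) b os (a + nb t1 + nb t2 + nb t3)"
    unfolding TW_def by (simp add: prod.atLeastLessThan_concat add.assoc)
  also have "... = TW a t1 b os * TW (a + nb t1) t2 b os * TW (a + nb t1 + nb t2) t3 b os *
      chb a (Mj t1 t2 t3) b os (a + nb t1 + nb t2 + nb t3)"
    unfolding TW_def by (intro arg_cong2[where f="(*)"] prod.cong refl) (auto simp: chb_def)
  finally show ?thesis by (simp add: chb_def)
qed

lemma fin_len: "finite {w::bool list. length w = n}"
  using finite_lists_length_eq[of "UNIV::bool set" n] by simp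

lemma sum_split: "(\<Sum>w\<in>{w::bool list. length w = m + k}. F w) =
   (\<Sum>w1\<in>{w. length w = m}. \<Sum>w2\<in>{w. length w = k}. F (w1 @ w2))"
proof -
  let ?A = "{w::bool list. length w = m}" and ?B = "{w::bool list. length w = k}"
  have "(\<Sum>w1\<in>?A. \<Sum>w2\<in>?B. F (w1 @ w2)) = (\<Sum>p\<in>?A \<times> ?B. F (fst p @ snd p))"
    by (subst sum.cartesian_product) (simp add: case_prod_beta)
  also have "... = (\<Sum>w\<in>(\<lambda>p. fst p @ snd p) ` (?A \<times> ?B). F w)"
    by (rule sum.reindex[symmetric, unfolded comp_def]) (auto simp: inj_on_def)
  also have "(\<lambda>p. fst p @ snd p) ` (?A \<times> ?B) = {w. length w = m + k}"
  proof
    show "{w. length w = m + k} \<subseteq> (\<lambda>p. fst p @ snd p) ` (?A \<times> ?B)"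
    proof
      fix w :: "bool list" assume "w \<in> {w. length w = m + k}"
      then have "(take m w, drop m w) \<in> ?A \<times> ?B" "w = fst (take m w, drop m w) @ snd (take m w, drop m w)" by auto
      then show "w \<in> (\<lambda>p. fst p @ snd p) ` (?A \<times> ?B)" by blast
    qed
  qed auto
  finally show ?thesis by simp
qed

lemma len2: "{w::bool list. length w = 2} = {[False,False],[False,True],[True,False],[True,True]}"
proof
  show "{w::bool list. length w = 2} \<subseteq> {[False,False],[False,True],[True,False],[True,True]}"
  proof
    fix w :: "bool list" assume "w \<in> {w. length w = 2}"
    then obtain x y where "w = [x, y]"
      by (auto simp: numeral_2_eq_2 length_Suc_conv)
    then show "w \<in> {[False,False],[False,True],[True,False],[True,True]}" by (cases x; cases y) auto
  qed
qed auto

definition cs :: real where "cs = (cos (pi/8))\<^sup>2"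
definition sn :: real where "sn = (sin (pi/8))\<^sup>2"
definition qs :: "bool \<Rightarrow> (bool \<Rightarrow> real) \<Rightarrow> real" where "qs z g = cs * g z + sn * g (\<not> z)"

lemma chsh_sum: "(\<Sum>w\<in>{w::bool list. length w = 2}. chsh_prob (w!0) (w!1) A C * g (w!0 \<noteq> w!1)) = qs (A \<and> C) g"
  unfolding len2 by (cases "A \<and> C") (auto simp: chsh_prob_def qs_def cs_def sn_def)

fun ex :: "ckt \<Rightarrow> bool list \<Rightarrow> (bool \<Rightarrow> real) \<Rightarrow> real" where
  "ex (In i) b g = g (b ! i)"
| "ex (Cst c) b g = g c"
| "ex (Neg t) b g = ex t b (\<lambda>u. g (\<not> u))"
| "ex (Xr t1 t2) b g = ex t1 b (\<lambda>u1. ex t2 b (\<lambda>u2. g (u1 \<noteq> u2)))"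
| "ex (An t1 t2) b g = ex t1 b (\<lambda>u1. ex t2 b (\<lambda>u2. qs (u1 \<and> u2) g))"
| "ex (Mj t1 t2 t3) b g = ex t1 b (\<lambda>u1. ex t2 b (\<lambda>u2. ex t3 b (\<lambda>u3.
      qs ((u1 \<noteq> u2) \<and> (u2 \<noteq> u3)) (\<lambda>v. g (u2 \<noteq> v)))))"

lemma main: "length pre = 2*a \<Longrightarrow>
  (\<Sum>w\<in>{w. length w = 2 * nb t}. TW a t b (pre @ w) * g (aff_eval (val a t) b (pre @ w))) = ex t b g"
proof (induction t arbitrary: a pre g)
  case (In i)
  then show ?case by (simp add: TW_def del: aff_eval.simps)
next
  case (Cst c)
  then show ?case by (simp add: TW_def)
next
  case (Neg t)
  then show ?case using Neg.IH[of pre a "\<lambda>u. g (\<not> u)"] by (simp add: TW_Neg)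
next
  case (Xr t1 t2)
  let ?L = "\<lambda>n. {w::bool list. length w = n}"
  let ?e1 = "\<lambda>w1. aff_eval (val a t1) b (pre @ w1)"
  have "(\<Sum>w\<in>{w. length w = 2 * nb (Xr t1 t2)}. TW a (Xr t1 t2) b (pre @ w) * g (aff_eval (val a (Xr t1 t2)) b (pre @ w)))
     = (\<Sum>w1\<in>?L (2 * nb t1). \<Sum>w2\<in>?L (2 * nb t2). TW a (Xr t1 t2) b (pre @ w1 @ w2) * g (aff_eval (val a (Xr t1 t2)) b (pre @ w1 @ w2)))"
    using sum_split[of _ "2 * nb t1" "2 * nb t2"] by (simp add: distrib_left)
  also have "... = (\<Sum>w1\<in>?L (2 * nb t1). TW a t1 b (pre @ w1) * (\<Sum>w2\<in>?L (2 * nb t2). TW (a + nb t1) t2 b (pre @ w1 @ w2) *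
        (\<lambda>u. g (?e1 w1 \<noteq> u)) (aff_eval (val (a + nb t1) t2) b (pre @ w1 @ w2))))"
    unfolding sum_distrib_left
  proof (intro sum.cong refl)
    fix w1 w2 assume w1: "w1 \<in> ?L (2 * nb t1)" and w2: "w2 \<in> ?L (2 * nb t2)"
    have l: "2 * (a + nb t1) \<le> length (pre @ w1)" using w1 Xr.prems by simp
    have "TW a t1 b (pre @ w1 @ w2) = TW a t1 b (pre @ w1)" using TW_local[OF l, of b w2] by simp
    moreover have "aff_eval (val a t1) b (pre @ w1 @ w2) = ?e1 w1" using val_local[OF l, of b w2] by simp
    ultimately show "TW a (Xr t1 t2) b (pre @ w1 @ w2) * g (aff_eval (val a (Xr t1 t2)) b (pre @ w1 @ w2)) =
       TW a t1 b (pre @ w1) * (TW (a + nb t1) t2 b (pre @ w1 @ w2) * (\<lambda>u. g (?e1 w1 \<noteq> u)) (aff_eval (val (a + nb t1) t2) b (pre @ w1 @ w2)))"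
      by (simp add: TW_Xr eval_axor FI FJ)
  qed
  also have "... = (\<Sum>w1\<in>?L (2 * nb t1). TW a t1 b (pre @ w1) * (\<lambda>u1. ex t2 b (\<lambda>u. g (u1 \<noteq> u))) (?e1 w1))"
  proof (intro sum.cong refl)
    fix w1 assume w1: "w1 \<in> ?L (2 * nb t1)"
    have "length (pre @ w1) = 2 * (a + nb t1)" using w1 Xr.prems by simp
    from Xr.IH(2)[OF this, of "\<lambda>u. g (?e1 w1 \<noteq> u)"]
    show "TW a t1 b (pre @ w1) * (\<Sum>w2\<in>?L (2 * nb t2). TW (a + nb t1) t2 b (pre @ w1 @ w2) *
        (\<lambda>u. g (?e1 w1 \<noteq> u)) (aff_eval (val (a + nb t1) t2) b (pre @ w1 @ w2))) =
       TW a t1 b (pre @ w1) * (\<lambda>u1. ex t2 b (\<lambda>u. g (u1 \<noteq> u))) (?e1 w1)" by simp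
  qed
  also have "... = ex (Xr t1 t2) b g"
    using Xr.IH(1)[OF Xr.prems, of "\<lambda>u1. ex t2 b (\<lambda>u. g (u1 \<noteq> u))"] by simp
  finally show ?case .
next
  case (An t1 t2)
  let ?L = "\<lambda>n. {w::bool list. length w = n}"
  let ?e1 = "\<lambda>w1. aff_eval (val a t1) b (pre @ w1)"
  let ?e2 = "\<lambda>w1 w2. aff_eval (val (a + nb t1) t2) b (pre @ w1 @ w2)"
  let ?k = "a + nb t1 + nb t2"
  have eq: "2 * nb (An t1 t2) = 2 * nb t1 + (2 * nb t2 + 2)" by simp
  have "(\<Sum>w\<in>{w. length w = 2 * nb (An t1 t2)}. TW a (An t1 t2) b (pre @ w) * g (aff_eval (val a (An t1 t2)) b (pre @ w)))
     = (\<Sum>w1\<in>?L (2 * nb t1). \<Sum>w2\<in>?L (2 * nb t2). \<Sum>w3\<in>?L 2. TW a (An t1 t2) b (pre @ w1 @ w2 @ w3) * g (aff_eval (val a (An t1 t2)) b (pre @ w1 @ w2 @ w3)))"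
    unfolding eq sum_split[of _ "2 * nb t1" "2 * nb t2 + 2"] sum_split[of _ "2 * nb t2" 2] by simp
  also have "... = (\<Sum>w1\<in>?L (2 * nb t1). \<Sum>w2\<in>?L (2 * nb t2). TW a t1 b (pre @ w1) * (TW (a + nb t1) t2 b (pre @ w1 @ w2) *
        (\<lambda>u. qs (?e1 w1 \<and> u) g) (?e2 w1 w2)))"
  proof (intro sum.cong refl)
    fix w1 w2 assume w1: "w1 \<in> ?L (2 * nb t1)" and w2: "w2 \<in> ?L (2 * nb t2)"
    have l1: "2 * (a + nb t1) \<le> length (pre @ w1)" using w1 An.prems by simp
    have l2: "2 * (a + nb t1 + nb t2) \<le> length (pre @ w1 @ w2)" using w1 w2 An.prems by simp
    have "(\<Sum>w3\<in>?L 2. TW a (An t1 t2) b (pre @ w1 @ w2 @ w3) * g (aff_eval (val a (An t1 t2)) b (pre @ w1 @ w2 @ w3)))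
       = (\<Sum>w3\<in>?L 2. (TW a t1 b (pre @ w1) * TW (a + nb t1) t2 b (pre @ w1 @ w2)) *
            (chsh_prob (w3!0) (w3!1) (?e1 w1) (?e2 w1 w2) * g (w3!0 \<noteq> w3!1)))"
    proof (rule sum.cong[OF refl])
      fix w3 assume w3: "w3 \<in> ?L 2"
      have n1: "(pre @ w1 @ w2 @ w3) ! (2 * ?k) = w3 ! 0" using w1 w2 w3 An.prems by (simp add: nth_append)
      have n2: "(pre @ w1 @ w2 @ w3) ! Suc (2 * ?k) = w3 ! 1" using w1 w2 w3 An.prems by (simp add: nth_append)
      have t1: "TW a t1 b (pre @ w1 @ w2 @ w3) = TW a t1 b (pre @ w1)" using TW_local[OF l1, of b "w2 @ w3"] by simp
      have t2: "TW (a + nb t1) t2 b (pre @ w1 @ w2 @ w3) = TW (a + nb t1) t2 b (pre @ w1 @ w2)"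
        using TW_local[OF l2, of b w3] by simp
      have v1: "aff_eval (val a t1) b (pre @ w1 @ w2 @ w3) = ?e1 w1" using val_local[OF l1, of b "w2 @ w3"] by simp
      have v2: "aff_eval (val (a + nb t1) t2) b (pre @ w1 @ w2 @ w3) = ?e2 w1 w2" using val_local[OF l2, of b w3] by simp
      show "TW a (An t1 t2) b (pre @ w1 @ w2 @ w3) * g (aff_eval (val a (An t1 t2)) b (pre @ w1 @ w2 @ w3)) =
         (TW a t1 b (pre @ w1) * TW (a + nb t1) t2 b (pre @ w1 @ w2)) *
            (chsh_prob (w3!0) (w3!1) (?e1 w1) (?e2 w1 w2) * g (w3!0 \<noteq> w3!1))"
        unfolding TW_An val.simps eval_pr t1 t2 v1 v2 n1 n2 by (simp add: ac_simps)
    qed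
    also have "... = (TW a t1 b (pre @ w1) * TW (a + nb t1) t2 b (pre @ w1 @ w2)) * qs (?e1 w1 \<and> ?e2 w1 w2) g"
      by (simp only: sum_distrib_left[symmetric] chsh_sum)
    finally show "(\<Sum>w3\<in>?L 2. TW a (An t1 t2) b (pre @ w1 @ w2 @ w3) * g (aff_eval (val a (An t1 t2)) b (pre @ w1 @ w2 @ w3))) =
       TW a t1 b (pre @ w1) * (TW (a + nb t1) t2 b (pre @ w1 @ w2) * (\<lambda>u. qs (?e1 w1 \<and> u) g) (?e2 w1 w2))"
      by simp
  qed
  also have "... = (\<Sum>w1\<in>?L (2 * nb t1). TW a t1 b (pre @ w1) * (\<lambda>u1. ex t2 b (\<lambda>u. qs (u1 \<and> u) g)) (?e1 w1))"
  proof (intro sum.cong refl)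
    fix w1 assume w1: "w1 \<in> ?L (2 * nb t1)"
    have "length (pre @ w1) = 2 * (a + nb t1)" using w1 An.prems by simp
    from An.IH(2)[OF this, of "\<lambda>u. qs (?e1 w1 \<and> u) g"]
    show "(\<Sum>w2\<in>?L (2 * nb t2). TW a t1 b (pre @ w1) * (TW (a + nb t1) t2 b (pre @ w1 @ w2) *
        (\<lambda>u. qs (?e1 w1 \<and> u) g) (?e2 w1 w2))) =
       TW a t1 b (pre @ w1) * (\<lambda>u1. ex t2 b (\<lambda>u. qs (u1 \<and> u) g)) (?e1 w1)"
      by (simp add: sum_distrib_left[symmetric])
  qed
  also have "... = ex (An t1 t2) b g"
    using An.IH(1)[OF An.prems, of "\<lambda>u1. ex t2 b (\<lambda>u. qs (u1 \<and> u) g)"] by simp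
  finally show ?case .
next
  case (Mj t1 t2 t3)
  let ?L = "\<lambda>n. {w::bool list. length w = n}"
  let ?e1 = "\<lambda>w1. aff_eval (val a t1) b (pre @ w1)"
  let ?e2 = "\<lambda>w1 w2. aff_eval (val (a + nb t1) t2) b (pre @ w1 @ w2)"
  let ?e3 = "\<lambda>w1 w2 w3. aff_eval (val (a + nb t1 + nb t2) t3) b (pre @ w1 @ w2 @ w3)"
  let ?k = "a + nb t1 + nb t2 + nb t3"
  let ?G = "\<lambda>u1 u2 u3. qs ((u1 \<noteq> u2) \<and> (u2 \<noteq> u3)) (\<lambda>v. g (u2 \<noteq> v))"
  have eq: "2 * nb (Mj t1 t2 t3) = 2 * nb t1 + (2 * nb t2 + (2 * nb t3 + 2))" by simp
  have "(\<Sum>w\<in>{w. length w = 2 * nb (Mj t1 t2 t3)}. TW a (Mj t1 t2 t3) b (pre @ w) * g (aff_eval (val a (Mj t1 t2 t3)) b (pre @ w)))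
     = (\<Sum>w1\<in>?L (2 * nb t1). \<Sum>w2\<in>?L (2 * nb t2). \<Sum>w3\<in>?L (2 * nb t3). \<Sum>w4\<in>?L 2.
         TW a (Mj t1 t2 t3) b (pre @ w1 @ w2 @ w3 @ w4) * g (aff_eval (val a (Mj t1 t2 t3)) b (pre @ w1 @ w2 @ w3 @ w4)))"
    unfolding eq sum_split[of _ "2 * nb t1" "2 * nb t2 + (2 * nb t3 + 2)"] sum_split[of _ "2 * nb t2" "2 * nb t3 + 2"]
      sum_split[of _ "2 * nb t3" 2] by simp
  also have "... = (\<Sum>w1\<in>?L (2 * nb t1). \<Sum>w2\<in>?L (2 * nb t2). \<Sum>w3\<in>?L (2 * nb t3).
        TW a t1 b (pre @ w1) * (TW (a + nb t1) t2 b (pre @ w1 @ w2) * (TW (a + nb t1 + nb t2) t3 b (pre @ w1 @ w2 @ w3) *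
        (\<lambda>u3. ?G (?e1 w1) (?e2 w1 w2) u3) (?e3 w1 w2 w3))))"
  proof (intro sum.cong refl)
    fix w1 w2 w3 assume w1: "w1 \<in> ?L (2 * nb t1)" and w2: "w2 \<in> ?L (2 * nb t2)" and w3: "w3 \<in> ?L (2 * nb t3)"
    have l1: "2 * (a + nb t1) \<le> length (pre @ w1)" using w1 Mj.prems by simp
    have l2: "2 * (a + nb t1 + nb t2) \<le> length (pre @ w1 @ w2)" using w1 w2 Mj.prems by simp
    have l3: "2 * (a + nb t1 + nb t2 + nb t3) \<le> length (pre @ w1 @ w2 @ w3)" using w1 w2 w3 Mj.prems by simp
    let ?T = "TW a t1 b (pre @ w1) * TW (a + nb t1) t2 b (pre @ w1 @ w2) * TW (a + nb t1 + nb t2) t3 b (pre @ w1 @ w2 @ w3)"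
    have "(\<Sum>w4\<in>?L 2. TW a (Mj t1 t2 t3) b (pre @ w1 @ w2 @ w3 @ w4) * g (aff_eval (val a (Mj t1 t2 t3)) b (pre @ w1 @ w2 @ w3 @ w4)))
       = (\<Sum>w4\<in>?L 2. ?T *
            (chsh_prob (w4!0) (w4!1) (?e1 w1 \<noteq> ?e2 w1 w2) (?e2 w1 w2 \<noteq> ?e3 w1 w2 w3) * (\<lambda>v. g (?e2 w1 w2 \<noteq> v)) (w4!0 \<noteq> w4!1)))"
    proof (rule sum.cong[OF refl])
      fix w4 assume w4: "w4 \<in> ?L 2"
      have n1: "(pre @ w1 @ w2 @ w3 @ w4) ! (2 * ?k) = w4 ! 0" using w1 w2 w3 w4 Mj.prems by (simp add: nth_append)
      have n2: "(pre @ w1 @ w2 @ w3 @ w4) ! Suc (2 * ?k) = w4 ! 1" using w1 w2 w3 w4 Mj.prems by (simp add: nth_append)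
      have t1: "TW a t1 b (pre @ w1 @ w2 @ w3 @ w4) = TW a t1 b (pre @ w1)" using TW_local[OF l1, of b "w2 @ w3 @ w4"] by simp
      have t2: "TW (a + nb t1) t2 b (pre @ w1 @ w2 @ w3 @ w4) = TW (a + nb t1) t2 b (pre @ w1 @ w2)"
        using TW_local[OF l2, of b "w3 @ w4"] by simp
      have t3: "TW (a + nb t1 + nb t2) t3 b (pre @ w1 @ w2 @ w3 @ w4) = TW (a + nb t1 + nb t2) t3 b (pre @ w1 @ w2 @ w3)"
        using TW_local[OF l3, of b w4] by simp
      have v1: "aff_eval (val a t1) b (pre @ w1 @ w2 @ w3 @ w4) = ?e1 w1" using val_local[OF l1, of b "w2 @ w3 @ w4"] by simp
      have v2: "aff_eval (val (a + nb t1) t2) b (pre @ w1 @ w2 @ w3 @ w4) = ?e2 w1 w2" using val_local[OF l2, of b "w3 @ w4"] by simp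
      have v3: "aff_eval (val (a + nb t1 + nb t2) t3) b (pre @ w1 @ w2 @ w3 @ w4) = ?e3 w1 w2 w3" using val_local[OF l3, of b w4] by simp
      have fp: "finite (ais (pr k))" "finite (ajs (pr k))" for k by auto
      show "TW a (Mj t1 t2 t3) b (pre @ w1 @ w2 @ w3 @ w4) * g (aff_eval (val a (Mj t1 t2 t3)) b (pre @ w1 @ w2 @ w3 @ w4)) =
         ?T * (chsh_prob (w4!0) (w4!1) (?e1 w1 \<noteq> ?e2 w1 w2) (?e2 w1 w2 \<noteq> ?e3 w1 w2 w3) * (\<lambda>v. g (?e2 w1 w2 \<noteq> v)) (w4!0 \<noteq> w4!1))"
        unfolding TW_Mj val.simps eval_axor[OF FI FI FJ FJ] eval_axor[OF FI fp(1) FJ fp(2)] eval_pr t1 t2 t3 v1 v2 v3 n1 n2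
        by (simp add: ac_simps)
    qed
    also have "... = ?T * qs ((?e1 w1 \<noteq> ?e2 w1 w2) \<and> (?e2 w1 w2 \<noteq> ?e3 w1 w2 w3)) (\<lambda>v. g (?e2 w1 w2 \<noteq> v))"
      using chsh_sum[of "?e1 w1 \<noteq> ?e2 w1 w2" "?e2 w1 w2 \<noteq> ?e3 w1 w2 w3" "\<lambda>v. g (?e2 w1 w2 \<noteq> v)"]
      by (simp only: sum_distrib_left[symmetric])
    finally show "(\<Sum>w4\<in>?L 2. TW a (Mj t1 t2 t3) b (pre @ w1 @ w2 @ w3 @ w4) * g (aff_eval (val a (Mj t1 t2 t3)) b (pre @ w1 @ w2 @ w3 @ w4))) =
       TW a t1 b (pre @ w1) * (TW (a + nb t1) t2 b (pre @ w1 @ w2) * (TW (a + nb t1 + nb t2) t3 b (pre @ w1 @ w2 @ w3) *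
        (\<lambda>u3. ?G (?e1 w1) (?e2 w1 w2) u3) (?e3 w1 w2 w3)))"
      by simp
  qed
  also have "... = (\<Sum>w1\<in>?L (2 * nb t1). \<Sum>w2\<in>?L (2 * nb t2).
        TW a t1 b (pre @ w1) * (TW (a + nb t1) t2 b (pre @ w1 @ w2) *
        (\<lambda>u2. ex t3 b (\<lambda>u3. ?G (?e1 w1) u2 u3)) (?e2 w1 w2)))"
  proof (intro sum.cong refl)
    fix w1 w2 assume w1: "w1 \<in> ?L (2 * nb t1)" and w2: "w2 \<in> ?L (2 * nb t2)"
    have "length (pre @ w1 @ w2) = 2 * (a + nb t1 + nb t2)" using w1 w2 Mj.prems by simp
    from Mj.IH(3)[OF this, of "\<lambda>u3. ?G (?e1 w1) (?e2 w1 w2) u3"]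
    show "(\<Sum>w3\<in>?L (2 * nb t3).
        TW a t1 b (pre @ w1) * (TW (a + nb t1) t2 b (pre @ w1 @ w2) * (TW (a + nb t1 + nb t2) t3 b (pre @ w1 @ w2 @ w3) *
        (\<lambda>u3. ?G (?e1 w1) (?e2 w1 w2) u3) (?e3 w1 w2 w3)))) =
        TW a t1 b (pre @ w1) * (TW (a + nb t1) t2 b (pre @ w1 @ w2) *
        (\<lambda>u2. ex t3 b (\<lambda>u3. ?G (?e1 w1) u2 u3)) (?e2 w1 w2))"
      by (simp add: sum_distrib_left[symmetric])
  qed
  also have "... = (\<Sum>w1\<in>?L (2 * nb t1). TW a t1 b (pre @ w1) *
        (\<lambda>u1. ex t2 b (\<lambda>u2. ex t3 b (\<lambda>u3. ?G u1 u2 u3))) (?e1 w1))"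
  proof (intro sum.cong refl)
    fix w1 assume w1: "w1 \<in> ?L (2 * nb t1)"
    have "length (pre @ w1) = 2 * (a + nb t1)" using w1 Mj.prems by simp
    from Mj.IH(2)[OF this, of "\<lambda>u2. ex t3 b (\<lambda>u3. ?G (?e1 w1) u2 u3)"]
    show "(\<Sum>w2\<in>?L (2 * nb t2). TW a t1 b (pre @ w1) * (TW (a + nb t1) t2 b (pre @ w1 @ w2) *
        (\<lambda>u2. ex t3 b (\<lambda>u3. ?G (?e1 w1) u2 u3)) (?e2 w1 w2))) =
        TW a t1 b (pre @ w1) * (\<lambda>u1. ex t2 b (\<lambda>u2. ex t3 b (\<lambda>u3. ?G u1 u2 u3))) (?e1 w1)"
      by (simp add: sum_distrib_left[symmetric])
  qed
  also have "... = ex (Mj t1 t2 t3) b g"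
    using Mj.IH(1)[OF Mj.prems, of "\<lambda>u1. ex t2 b (\<lambda>u2. ex t3 b (\<lambda>u3. ?G u1 u2 u3))"] by simp
  finally show ?case .
qed

lemma cs_sn: "cs + sn = 1" unfolding cs_def sn_def by (simp add: add.commute)

definition gm :: real where "gm = sqrt 2 / 2"

lemma cs_m_sn: "cs - sn = gm"
proof -
  have "cos (2 * (pi/8)) = cs - sn" unfolding cs_def sn_def by (rule cos_double)
  moreover have "2 * (pi/8) = pi/4" by simp
  ultimately show ?thesis using cos_45 gm_def by simp
qed

lemma cs_eq: "cs = (1 + gm)/2" using cs_sn cs_m_sn by simp
lemma sn_eq: "sn = (1 - gm)/2" using cs_sn cs_m_sn by simp

lemma qs_lin: "qs z (\<lambda>u. x + y * h u) = x + y * qs z h"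
proof -
  have "qs z (\<lambda>u. x + y * h u) = (cs + sn) * x + y * qs z h"
    unfolding qs_def by (simp add: algebra_simps)
  then show ?thesis using cs_sn by simp
qed

lemma ex_lin: "ex t b (\<lambda>u. x + y * g u) = x + y * ex t b g"
proof (induction t arbitrary: x y g)
  case (Neg t)
  show ?case by (simp only: ex.simps Neg.IH)
next
  case (Xr t1 t2)
  show ?case by (simp only: ex.simps Xr.IH)
next
  case (An t1 t2)
  show ?case by (simp only: ex.simps An.IH qs_lin)
next
  case (Mj t1 t2 t3)
  show ?case by (simp only: ex.simps Mj.IH qs_lin)
qed simp_all

definition sg :: "bool \<Rightarrow> real" where "sg u = (if u then -1 else 1)"
definition Ev :: "ckt \<Rightarrow> bool list \<Rightarrow> real" where "Ev t b = ex t b sg"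

lemma ex_two: "ex t b g = (g False + g True)/2 + (g False - g True)/2 * Ev t b"
proof -
  have "g = (\<lambda>u. (g False + g True)/2 + (g False - g True)/2 * sg u)"
    by (rule ext) (simp add: sg_def field_simps)
  then have "ex t b g = ex t b (\<lambda>u. (g False + g True)/2 + (g False - g True)/2 * sg u)" by simp
  also have "... = (g False + g True)/2 + (g False - g True)/2 * ex t b sg" by (rule ex_lin)
  finally show ?thesis by (simp only: Ev_def)
qed

lemma Ev_Cst: "Ev (Cst c) b = sg c" by (simp add: Ev_def)

lemma Ev_Xr: "Ev (Xr t1 t2) b = Ev t1 b * Ev t2 b"
proof -
  have "Ev (Xr t1 t2) b = ex t1 b (\<lambda>u1. ex t2 b (\<lambda>u2. sg (u1 \<noteq> u2)))" by (simp add: Ev_def)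
  also have "... = Ev t1 b * Ev t2 b" by (simp add: ex_two[of t2] ex_two[of t1] sg_def)
  finally show ?thesis .
qed

lemma Ev_AnIn: "Ev (An (In i) t) b = (if b ! i then gm * Ev t b else gm)"
proof -
  have "Ev (An (In i) t) b = ex t b (\<lambda>u2. qs (b ! i \<and> u2) sg)" by (simp add: Ev_def)
  also have "... = (if b ! i then gm * Ev t b else gm)"
    by (simp add: ex_two[of t] qs_def sg_def cs_eq sn_eq field_simps)
  finally show ?thesis .
qed

lemma Ev_AnNIn: "Ev (An (Neg (In i)) t) b = (if b ! i then gm else gm * Ev t b)"
proof -
  have "Ev (An (Neg (In i)) t) b = ex t b (\<lambda>u2. qs (\<not> b ! i \<and> u2) sg)" by (simp add: Ev_def)
  also have "... = (if b ! i then gm else gm * Ev t b)"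
    by (simp add: ex_two[of t] qs_def sg_def cs_eq sn_eq field_simps)
  finally show ?thesis .
qed

lemma L3: "ex t3 b (\<lambda>u3. qs ((u1 \<noteq> u2) \<and> (u2 \<noteq> u3)) (\<lambda>v. sg (u2 \<noteq> v))) =
   gm * (sg u1 + sg u2) / 2 + gm * (1 - sg u1 * sg u2) / 2 * Ev t3 b"
  by (cases u1; cases u2) (simp_all add: ex_two[of t3] qs_def sg_def cs_eq sn_eq field_simps)

lemma L2: "ex t2 b (\<lambda>u2. gm * (sg u1 + sg u2) / 2 + gm * (1 - sg u1 * sg u2) / 2 * E) =
   gm * (sg u1 + E) / 2 + gm * (1 - sg u1 * E) / 2 * Ev t2 b"
proof -
  have "(\<lambda>u2. gm * (sg u1 + sg u2) / 2 + gm * (1 - sg u1 * sg u2) / 2 * E) =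
     (\<lambda>u2. gm * (sg u1 + E) / 2 + gm * (1 - sg u1 * E) / 2 * sg u2)"
    by (rule ext) (auto simp: sg_def field_simps)
  then show ?thesis by (simp only: ex_lin Ev_def)
qed

lemma L1: "ex t1 b (\<lambda>u1. gm * (sg u1 + E) / 2 + gm * (1 - sg u1 * E) / 2 * F) =
   gm * (Ev t1 b + E + F - Ev t1 b * E * F) / 2"
proof -
  have "(\<lambda>u1. gm * (sg u1 + E) / 2 + gm * (1 - sg u1 * E) / 2 * F) =
     (\<lambda>u1. gm * (E + F) / 2 + gm * (1 - E * F) / 2 * sg u1)"
    by (rule ext) (auto simp: sg_def field_simps)
  then have "ex t1 b (\<lambda>u1. gm * (sg u1 + E) / 2 + gm * (1 - sg u1 * E) / 2 * F) =
     gm * (E + F) / 2 + gm * (1 - E * F) / 2 * Ev t1 b" by (simp only: ex_lin Ev_def)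
  also have "... = gm * (Ev t1 b + E + F - Ev t1 b * E * F) / 2" by (simp add: field_simps)
  finally show ?thesis .
qed

lemma Ev_Mj: "Ev (Mj t1 t2 t3) b = gm * (Ev t1 b + Ev t3 b + Ev t2 b - Ev t1 b * Ev t3 b * Ev t2 b) / 2"
proof -
  have "Ev (Mj t1 t2 t3) b = ex t1 b (\<lambda>u1. ex t2 b (\<lambda>u2. ex t3 b (\<lambda>u3.
      qs ((u1 \<noteq> u2) \<and> (u2 \<noteq> u3)) (\<lambda>v. sg (u2 \<noteq> v)))))" by (simp add: Ev_def)
  also have "... = gm * (Ev t1 b + Ev t3 b + Ev t2 b - Ev t1 b * Ev t3 b * Ev t2 b) / 2"
    by (simp only: L3 L2 L1)
  finally show ?thesis .
qed

fun sh :: "(bool list \<Rightarrow> bool) \<Rightarrow> bool list \<Rightarrow> nat \<Rightarrow> ckt" where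
  "sh f pre 0 = Cst (f pre)"
| "sh f pre (Suc k) = Xr (An (In (length pre)) (sh f (pre @ [True]) k))
                         (An (Neg (In (length pre))) (sh f (pre @ [False]) k))"

lemma Ev_sh: "length pre + k = length b \<Longrightarrow> take (length pre) b = pre \<Longrightarrow>
   Ev (sh f pre k) b = sg (f b) * gm ^ (2 * k)"
proof (induction k arbitrary: pre)
  case 0
  then have "pre = b" by simp
  then show ?case by (simp add: Ev_Cst)
next
  case (Suc k)
  let ?i = "length pre"
  have i: "?i < length b" using Suc.prems by simp
  have tk: "take (Suc ?i) b = pre @ [b ! ?i]" using i Suc.prems(2) by (simp add: take_Suc_conv_app_nth)
  show ?case
  proof (cases "b ! ?i")
    case True
    then have "Ev (sh f (pre @ [True]) k) b = sg (f b) * gm ^ (2 * k)"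
      using Suc.IH[of "pre @ [True]"] Suc.prems tk by simp
    then show ?thesis using True by (simp add: Ev_Xr Ev_AnIn Ev_AnNIn power_add power_mult_distrib mult_ac)
  next
    case False
    then have "Ev (sh f (pre @ [False]) k) b = sg (f b) * gm ^ (2 * k)"
      using Suc.IH[of "pre @ [False]"] Suc.prems tk by simp
    then show ?thesis using False by (simp add: Ev_Xr Ev_AnIn Ev_AnNIn power_add power_mult_distrib mult_ac)
  qed
qed

lemma vl_sh: "length pre + k = n \<Longrightarrow> vl n (sh f pre k)"
  by (induction k arbitrary: pre) auto

fun amp :: "nat \<Rightarrow> ckt \<Rightarrow> ckt" where
  "amp 0 t = t"
| "amp (Suc r) t = Mj (amp r t) (amp r t) (amp r t)"

lemma vl_amp: "vl n t \<Longrightarrow> vl n (amp r t)"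
  by (induction r) auto

definition Dm :: "real \<Rightarrow> real" where "Dm c = gm * (3 * c - c ^ 3) / 2"

lemma Ev_amp: "Ev t b = s * c \<Longrightarrow> s * s = 1 \<Longrightarrow> Ev (amp r t) b = s * (Dm ^^ r) c"
proof (induction r)
  case 0
  then show ?case by simp
next
  case (Suc r)
  define d where "d = (Dm ^^ r) c"
  have e: "Ev (amp r t) b = s * d" using Suc unfolding d_def by simp
  have dd: "(Dm ^^ Suc r) c = gm * (3 * d - d * d * d) / 2" unfolding d_def by (simp add: Dm_def power3_eq_cube)
  have "s * d * (s * d) * (s * d) = (s * s) * s * (d * d * d)" by (simp add: mult_ac)
  then have c3: "s * d * (s * d) * (s * d) = s * (d * d * d)" using Suc.prems(2) by simp
  have "Ev (amp (Suc r) t) b = gm * (s * d + s * d + s * d - s * d * (s * d) * (s * d)) / 2"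
    using e by (simp add: Ev_Mj)
  also have "... = s * (gm * (3 * d - d * d * d) / 2)" unfolding c3 by (simp add: algebra_simps)
  finally show ?case unfolding dd .
qed

lemma gm_lo: "7/10 \<le> gm"
proof -
  have "7/5 \<le> sqrt (2::real)" by (rule real_le_rsqrt) (simp add: power2_eq_square)
  then show ?thesis unfolding gm_def by simp
qed

lemma gm_hi: "gm \<le> 1"
proof -
  have "sqrt (2::real) \<le> 2" by (rule real_le_lsqrt) (simp_all add: power2_eq_square)
  then show ?thesis unfolding gm_def by simp
qed

lemma D1: assumes "0 \<le> x" "x \<le> 1/5" shows "(103/100) * x \<le> Dm x"
proof -
  have "x * x \<le> 1/25" using assms mult_mono[of x "1/5" x "1/5"] by simp
  then have a: "74/25 \<le> 3 - x * x" by simp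
  have "(7/10) * (74/25) \<le> gm * (3 - x * x)" using gm_lo a by (intro mult_mono) auto
  then have "103/50 \<le> gm * (3 - x * x)" by simp
  then have "x * (103/50) \<le> x * (gm * (3 - x * x))" using assms(1) by (rule mult_left_mono)
  then show ?thesis unfolding Dm_def by (simp add: power3_eq_cube algebra_simps)
qed

lemma D2: assumes "1/5 \<le> x" "x \<le> 1" shows "1/5 \<le> Dm x"
proof -
  have "x * x \<le> 1" using assms mult_mono[of x 1 x 1] by simp
  then have "0 \<le> 74/25 - x * x - x/5" using assms by simp
  moreover have "0 \<le> x - 1/5" using assms by simp
  ultimately have "0 \<le> (x - 1/5) * (74/25 - x * x - x/5)" by simp
  moreover have "(x - 1/5) * (74/25 - x * x - x/5) = 3 * x - x ^ 3 - 74/125"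
    by (simp add: power3_eq_cube field_simps)
  ultimately have b: "74/125 \<le> 3 * x - x ^ 3" by simp
  have "(7/10) * (74/125) \<le> gm * (3 * x - x ^ 3)" using gm_lo b by (intro mult_mono) auto
  then show ?thesis unfolding Dm_def by simp
qed

lemma D3: assumes "0 \<le> x" "x \<le> 1" shows "0 \<le> Dm x \<and> Dm x \<le> 1"
proof -
  have "x * x \<le> 1" using assms mult_mono[of x 1 x 1] by simp
  then have "x * x * x \<le> x" using assms mult_right_mono[of "x*x" 1 x] by simp
  then have c1: "0 \<le> 3 * x - x ^ 3" using assms by (simp add: power3_eq_cube)
  have "0 \<le> (x - 1) * (x - 1) * (x + 2)" using assms by simp
  then have c2: "3 * x - x ^ 3 \<le> 2" by (simp add: power3_eq_cube algebra_simps)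
  have g: "0 \<le> gm" using gm_lo by simp
  have "gm * (3 * x - x ^ 3) \<le> 1 * 2" using gm_hi c2 c1 g by (intro mult_mono) auto
  then show ?thesis unfolding Dm_def using g c1 by simp
qed

lemma D_iter: assumes "0 < c" "c \<le> 1"
  shows "0 \<le> (Dm ^^ r) c \<and> (Dm ^^ r) c \<le> 1 \<and> min (1/5) ((103/100) ^ r * c) \<le> (Dm ^^ r) c"
proof (induction r)
  case 0
  then show ?case using assms by simp
next
  case (Suc r)
  let ?y = "(Dm ^^ r) c"
  have y: "0 \<le> ?y" "?y \<le> 1" "min (1/5) ((103/100) ^ r * c) \<le> ?y" using Suc by auto
  have "min (1/5) ((103/100) ^ Suc r * c) \<le> Dm ?y"
  proof (cases "1/5 \<le> ?y")
    case True
    then show ?thesis using D2[OF True y(2)] by simp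
  next
    case False
    then have "(103/100) ^ r * c \<le> ?y" using y(3) by (simp add: min_def split: if_splits)
    then have "(103/100) * ((103/100) ^ r * c) \<le> (103/100) * ?y" by (rule mult_left_mono) simp
    also have "... \<le> Dm ?y" using D1[OF y(1)] False by simp
    finally show ?thesis by simp
  qed
  then show ?case using D3[OF y(1,2)] by simp
qed

lemma D_reach: assumes "0 < c" "c \<le> 1" shows "\<exists>r. 1/5 \<le> (Dm ^^ r) c"
proof -
  obtain r where r: "1 / (5 * c) < (103/100) ^ r" using real_arch_pow[of "103/100::real" "1/(5*c)"] by auto
  then have "1/5 < (103/100) ^ r * c" using assms by (simp add: field_simps)
  then show ?thesis using D_iter[OF assms, of r] by (auto simp: min_def split: if_splits)
qed

definition mkP :: "ckt \<Rightarrow> l2proc" where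
  "mkP tr = \<lparr>nboxes = nb tr, qtime = (\<lambda>p. 2 * fst p + (if snd p then 1 else 0)),
     inp = (\<lambda>t. if even t then fst (binp 0 tr (t div 2)) else snd (binp 0 tr (t div 2))),
     outp = val 0 tr\<rparr>"

lemma transcript_mkP: "transcript_prob (mkP tr) b os = TW 0 tr b os"
  unfolding transcript_prob_def TW_def chb_def mkP_def by (simp add: atLeast0LessThan)

lemma output_mkP: "output_prob (mkP tr) b v = ex tr b (\<lambda>u. if u = v then 1 else 0)"
proof -
  have A: "{os. length os = 2 * nb tr \<and> aff_eval (val 0 tr) b os = v} =
     {os \<in> {os. length os = 2 * nb tr}. aff_eval (val 0 tr) b os = v}" by auto
  have "output_prob (mkP tr) b v = sum (TW 0 tr b) {os. length os = 2 * nb tr \<and> aff_eval (val 0 tr) b os = v}"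
    unfolding output_prob_def transcript_mkP by (simp add: mkP_def)
  also have "... = (\<Sum>os\<in>{os. length os = 2 * nb tr}. if aff_eval (val 0 tr) b os = v then TW 0 tr b os else 0)"
    by (simp only: A sum.inter_filter[OF fin_len])
  also have "... = (\<Sum>os\<in>{os. length os = 2 * nb tr}.
      TW 0 tr b ([] @ os) * (\<lambda>u. if u = v then 1 else 0) (aff_eval (val 0 tr) b ([] @ os)))"
    by (rule sum.cong) auto
  also have "... = ex tr b (\<lambda>u. if u = v then 1 else 0)" by (rule main) simp
  finally show ?thesis .
qed

lemma wf_mkP: assumes "vl n tr" shows "l2proc_wf n (mkP tr)"
proof -
  let ?q = "\<lambda>p::nat \<times> bool. 2 * fst p + (if snd p then 1 else 0)"
  have inj: "inj_on ?q ({0..<nb tr} \<times> UNIV)"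
    unfolding inj_on_def by (auto split: if_splits) presburger+
  have img: "?q ` ({0..<nb tr} \<times> UNIV) = {0..<2 * nb tr}"
  proof
    show "?q ` ({0..<nb tr} \<times> UNIV) \<subseteq> {0..<2 * nb tr}" by auto
    show "{0..<2 * nb tr} \<subseteq> ?q ` ({0..<nb tr} \<times> UNIV)"
    proof
      fix t assume t: "t \<in> {0..<2 * nb tr}"
      have "t = ?q (t div 2, odd t)" by simp
      moreover have "(t div 2, odd t) \<in> {0..<nb tr} \<times> UNIV" using t by auto
      ultimately show "t \<in> ?q ` ({0..<nb tr} \<times> UNIV)" by blast
    qed
  qed
  have bij: "bij_betw (qtime (mkP tr)) ({0..<nboxes (mkP tr)} \<times> UNIV) {0..<2 * nboxes (mkP tr)}"
    using inj img unfolding bij_betw_def mkP_def by simp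
  have inps: "aff_ok n t (inp (mkP tr) t)" if t: "t < 2 * nboxes (mkP tr)" for t
  proof -
    have j: "t div 2 < nb tr" using t by (simp add: mkP_def)
    have "2 * (t div 2) \<le> t" by simp
    then have sub: "{2 * 0..<2 * (t div 2)} \<subseteq> {0..<t}" by auto
    have "ajs (fst (binp 0 tr (t div 2))) \<subseteq> {0..<t} \<and> ajs (snd (binp 0 tr (t div 2))) \<subseteq> {0..<t}"
      using JB2[of 0 "t div 2" tr] j sub by auto
    moreover have "ais (fst (binp 0 tr (t div 2))) \<subseteq> {0..<n} \<and> ais (snd (binp 0 tr (t div 2))) \<subseteq> {0..<n}"
      using IB2[OF assms] by blast
    ultimately show ?thesis unfolding aff_ok_iff by (simp add: mkP_def)
  qed
  have out: "aff_ok n (2 * nboxes (mkP tr)) (outp (mkP tr))"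
    unfolding aff_ok_iff using JB1[of 0 tr] IB1[OF assms, of 0] by (simp add: mkP_def)
  show ?thesis unfolding l2proc_wf_def using bij inps out by blast
qed

theorem mainTheorem1:
  shows "\<exists>\<delta>::real. \<delta> < 1/2 \<and>
           (\<forall>n::nat. n \<ge> 1 \<longrightarrow> (\<forall>f :: bool list \<Rightarrow> bool.
              \<exists>P. l2proc_wf n P \<and>
                  (\<forall>b. length b = n \<longrightarrow> output_prob P b (f b) \<ge> 1 - \<delta>)))"
proof (rule exI[of _ "2/5"], intro conjI allI impI)
  show "(2/5::real) < 1/2" by simp
  fix n :: nat and f :: "bool list \<Rightarrow> bool"
  let ?c = "gm ^ (2 * n)"
  have c0: "0 < ?c" using gm_lo by simp
  have c1: "?c \<le> 1" using gm_lo gm_hi by (simp add: power_le_one)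
  obtain r where r: "1/5 \<le> (Dm ^^ r) ?c" using D_reach[OF c0 c1] by blast
  let ?tr = "amp r (sh f [] n)"
  have "vl n ?tr" using vl_sh[of "[]" n n f] vl_amp by simp
  then have wf: "l2proc_wf n (mkP ?tr)" by (rule wf_mkP)
  have "output_prob (mkP ?tr) b (f b) \<ge> 1 - 2/5" if b: "length b = n" for b
  proof -
    have "Ev (sh f [] n) b = sg (f b) * ?c" using Ev_sh[of "[]" n b f] b by simp
    moreover have "sg (f b) * sg (f b) = 1" by (simp add: sg_def)
    ultimately have e: "Ev ?tr b = sg (f b) * (Dm ^^ r) ?c" by (rule Ev_amp)
    have "output_prob (mkP ?tr) b (f b) = 1/2 + sg (f b) / 2 * Ev ?tr b"
      unfolding output_mkP by (subst ex_two) (simp add: sg_def)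
    also have "... = 1/2 + (Dm ^^ r) ?c / 2" using e by (simp add: sg_def)
    finally show ?thesis using r by simp
  qed
  then show "\<exists>P. l2proc_wf n P \<and> (\<forall>b. length b = n \<longrightarrow> 1 - 2/5 \<le> output_prob P b (f b))"
    using wf by blast
qed

end
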